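(* If $(X,(f_n))$ is a complex situation, then $A^f$ is a $\Sigma^0_2$ digraph on $X$ of uncountable Borel chromatic number.
   Context: For a sequence $(f_n)$ of partial functions, $A^f:=\bigcup_n\mathrm{Graph}(f_n)$. A complex situation is a pair $(X,(f_n)_{n\in\omega})$ where $X$ is a nonempty Polish space, each $f_n$ is a partial continuous open map on $X$ whose domain and range are open in $X$, and $\Delta(X)\subseteq\overline{A^f}\setminus A^f$ ($\Delta(X)$ the diagonal). A digraph is a relation disjoint from the diagonal; its Borel chromatic number is the least cardinality of a Polish $Y$ admitting a Borel $c:X\to Y$ with $c(x)\neq c(x')$ for $(x,x')$ in the relation. *)

theory Defs
  imports "HOL-Analysis.Analysis"
begin

definition graph_union :: "(nat \<Rightarrow> ('a \<rightharpoonup> 'a)) \<Rightarrow> ('a \<times> 'a) set" where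
  "graph_union f = (\<Union>n. {(x, y). f n x = Some y})"

definition diagonal :: "('a \<times> 'a) set" where
  "diagonal = {(x, x) | x. True}"

definition is_digraph :: "('a \<times> 'a) set \<Rightarrow> bool" where
  "is_digraph R \<longleftrightarrow> R \<inter> diagonal = {}"

definition partial_cont_open_map :: "('a::topological_space \<rightharpoonup> 'a) \<Rightarrow> bool" where
  "partial_cont_open_map g \<longleftrightarrow>
     open (dom g) \<and> open (ran g) \<and>
     continuous_on (dom g) (\<lambda>x. the (g x)) \<and>
     (\<forall>U. open U \<and> U \<subseteq> dom g \<longrightarrow> open ((\<lambda>x. the (g x)) ` U))"

text \<open>X is the whole (nonempty) Polish type 'a.\<close>
definition complex_situation :: "(nat \<Rightarrow> ('a::polish_space \<rightharpoonup> 'a)) \<Rightarrow> bool" where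
  "complex_situation f \<longleftrightarrow>
     (\<forall>n. partial_cont_open_map (f n)) \<and>
     diagonal \<subseteq> closure (graph_union f) - graph_union f"

definition borel_coloring :: "('a::topological_space \<times> 'a) set \<Rightarrow> ('a \<Rightarrow> 'b::topological_space) \<Rightarrow> bool" where
  "borel_coloring R c \<longleftrightarrow> c \<in> borel_measurable borel \<and> (\<forall>(x, x') \<in> R. c x \<noteq> c x')"

end

theory Submission
  imports Defs
begin

definition meagerX :: "'a::topological_space set \<Rightarrow> bool" where
  "meagerX M \<longleftrightarrow> (\<exists>\<G>. countable \<G> \<and> (\<forall>T\<in>\<G>. closed T \<and> interior T = {}) \<and> M \<subseteq> \<Union>\<G>)"

definition BPX :: "'a::topological_space set \<Rightarrow> bool" where
  "BPX B \<longleftrightarrow> (\<exists>U. open U \<and> meagerX ((B - U) \<union> (U - B)))"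

lemma meagerX_subset: "meagerX M \<Longrightarrow> N \<subseteq> M \<Longrightarrow> meagerX N"
  unfolding meagerX_def by (meson subset_trans)

lemma meagerX_UN:
  assumes "countable I" "\<And>i. i \<in> I \<Longrightarrow> meagerX (M i)"
  shows "meagerX (\<Union>i\<in>I. M i)"
proof -
  have "\<forall>i\<in>I. \<exists>G. countable G \<and> (\<forall>T\<in>G. closed T \<and> interior T = {}) \<and> M i \<subseteq> \<Union>G"
  proof
    fix i assume "i \<in> I"
    then have "meagerX (M i)" by (rule assms(2))
    then show "\<exists>G. countable G \<and> (\<forall>T\<in>G. closed T \<and> interior T = {}) \<and> M i \<subseteq> \<Union>G"
      by (simp only: meagerX_def)
  qed
  then obtain G where G0: "\<forall>i\<in>I. countable (G i) \<and> (\<forall>T\<in>G i. closed T \<and> interior T = {}) \<and> M i \<subseteq> \<Union>(G i)"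
    by (rule bchoice[THEN exE])
  have c: "countable (\<Union>i\<in>I. G i)" using G0 assms(1) by (intro countable_UN) auto
  have cl: "\<forall>T\<in>(\<Union>i\<in>I. G i). closed T \<and> interior T = {}"
  proof
    fix T assume "T \<in> (\<Union>i\<in>I. G i)"
    then obtain i where i: "i \<in> I" "T \<in> G i" by (rule UN_E)
    then show "closed T \<and> interior T = {}" using G0 by auto
  qed
  have su: "(\<Union>i\<in>I. M i) \<subseteq> \<Union>(\<Union>i\<in>I. G i)"
  proof
    fix x assume "x \<in> (\<Union>i\<in>I. M i)"
    then obtain i where i: "i \<in> I" "x \<in> M i" by (rule UN_E)
    have "M i \<subseteq> \<Union>(G i)" using G0 i(1) by simp
    then have "x \<in> \<Union>(G i)" using i(2) by (rule subsetD)
    then show "x \<in> \<Union>(\<Union>i\<in>I. G i)" using i(1) by auto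
  qed
  show ?thesis unfolding meagerX_def by (intro exI[of _ "\<Union>i\<in>I. G i"] conjI c cl su)
qed


lemma meagerX_closed: "closed S \<Longrightarrow> interior S = {} \<Longrightarrow> meagerX S"
  unfolding meagerX_def by (rule exI[of _ "{S}"]) auto

lemma BPX_borel:
  assumes "B \<in> sets borel"
  shows "BPX (B :: 'a::topological_space set)"
proof -
  have "B \<in> sigma_sets UNIV {S. open S}" using assms by (simp add: sets_borel)
  then show ?thesis
  proof (induction rule: sigma_sets.induct)
    case (Basic a)
    then show ?case unfolding BPX_def by (intro exI[of _ a]) (auto simp: meagerX_def)
  next
    case Empty
    then show ?case unfolding BPX_def by (intro exI[of _ "{}"]) (auto simp: meagerX_def)
  next
    case (Compl a)
    then obtain U where U: "open U" "meagerX ((a - U) \<union> (U - a))" unfolding BPX_def by blast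
    define S where "S = - U - interior (- U)"
    have cS: "closed S" unfolding S_def using U(1) closed_Compl open_interior closed_Diff by blast
    have "interior S \<subseteq> interior (- U)"
      by (rule interior_maximal) (use interior_subset[of S] in \<open>auto simp: S_def\<close>)
    then have iS: "interior S = {}" using interior_subset[of S] unfolding S_def by blast
    have sub: "((UNIV - a) - interior (- U)) \<union> (interior (- U) - (UNIV - a)) \<subseteq> ((a - U) \<union> (U - a)) \<union> S"
      unfolding S_def using interior_subset[of "- U"] by blast
    have mm: "meagerX (((a - U) \<union> (U - a)) \<union> S)"
      using meagerX_UN[of "{True, False}" "\<lambda>b. if b then (a - U) \<union> (U - a) else S"]
        U(2) meagerX_closed[OF cS iS] by (simp add: Un_commute)
    show ?case unfolding BPX_def
      using meagerX_subset[OF mm sub] open_interior by blast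
  next
    case (Union A)
    then obtain U where U: "\<And>i. open (U i) \<and> meagerX ((A i - U i) \<union> (U i - A i))"
      unfolding BPX_def by metis
    have sub: "((\<Union>i. A i) - (\<Union>i. U i)) \<union> ((\<Union>i. U i) - (\<Union>i. A i)) \<subseteq> (\<Union>i\<in>UNIV. (A i - U i) \<union> (U i - A i))"
      by blast
    have mm: "meagerX (\<Union>i\<in>UNIV. (A i - U i) \<union> (U i - A i))"
      by (rule meagerX_UN) (use U in auto)
    have "open (\<Union>i. U i)" using U by auto
    then show ?case unfolding BPX_def
      using meagerX_subset[OF mm sub] by blast
  qed
qed

lemma baire_open:
  fixes V :: "'a::polish_space set"
  assumes "open V" "V \<noteq> {}" "countable \<G>"
    and G: "\<And>T. T \<in> \<G> \<Longrightarrow> closedin (top_of_set V) T \<and> (\<forall>W. open W \<and> W \<subseteq> T \<longrightarrow> W = {})"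
  shows "\<not> V \<subseteq> \<Union>\<G>"
proof
  assume sub: "V \<subseteq> \<Union>\<G>"
  let ?X = "top_of_set V"
  have cm: "completely_metrizable_space ?X"
    by (rule completely_metrizable_space_openin) (use assms(1) completely_metrizable_space_euclidean in auto)
  have "?X interior_of \<Union>\<G> = {}"
  proof (rule Baire_category_alt)
    fix T assume T: "T \<in> \<G>"
    show "closedin ?X T \<and> ?X interior_of T = {}"
      using G[OF T] assms(1) openin_open_trans[of V _] by (auto simp: interior_of_eq_empty)
  qed (use cm assms(3) in auto)
  moreover have "V \<subseteq> ?X interior_of \<Union>\<G>"
    by (rule interior_of_maximal) (use sub in auto)
  ultimately show False using assms(2) by blast
qed

lemma closed_graph_on:
  fixes g :: "'a::metric_space \<Rightarrow> 'a"
  assumes "closed C" "continuous_on C g"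
  shows "closed {(x, y). x \<in> C \<and> y = g x}"
proof -
  have cont: "continuous_on (C \<times> UNIV) (\<lambda>p. dist (g (fst p)) (snd p))"
    by (intro continuous_intros continuous_on_compose2[OF assms(2)]) auto
  have eq: "{(x, y). x \<in> C \<and> y = g x} = (C \<times> UNIV) \<inter> (\<lambda>p. dist (g (fst p)) (snd p)) -` {0}"
    by auto
  have "closedin (top_of_set (C \<times> UNIV)) ((C \<times> UNIV) \<inter> (\<lambda>p. dist (g (fst p)) (snd p)) -` {0})"
    by (rule continuous_closedin_preimage[OF cont]) auto
  then show ?thesis unfolding eq
    using closedin_closed_trans closed_Times assms(1) closed_UNIV by blast
qed

lemma open_fsigma_ex:
  fixes D :: "'a::metric_space set"
  assumes "open D"
  shows "\<exists>C::nat \<Rightarrow> 'a set. (\<forall>k. closed (C k)) \<and> D = \<Union>(range C)"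
proof -
  have "fsigma_in euclidean D"
    using open_imp_fsigma_in[OF metrizable_space_euclidean] assms by auto
  then have "\<exists>C. (\<forall>n. closedin euclidean (C n)) \<and> (\<forall>n. C n \<subseteq> C (Suc n)) \<and> \<Union>(range C) = D"
    by (simp only: fsigma_in_ascending)
  then obtain C :: "nat \<Rightarrow> 'a set" where C: "\<forall>n. closedin euclidean (C n)" "\<Union>(range C) = D"
    by blast
  have "\<forall>k. closed (C k)" using C(1) closed_closedin by blast
  with C(2) show ?thesis by blast
qed

lemma fsigma_graph_union:
  fixes f :: "nat \<Rightarrow> ('a::polish_space \<rightharpoonup> 'a)"
  assumes "\<And>n. partial_cont_open_map (f n)"
  shows "fsigma (graph_union f)"
proof -
  have "\<forall>n. \<exists>C::nat \<Rightarrow> 'a set. (\<forall>k. closed (C k)) \<and> dom (f n) = \<Union>(range C)"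
  proof
    fix n
    have od: "open (dom (f n))" using assms[of n] by (simp add: partial_cont_open_map_def)
    show "\<exists>C::nat \<Rightarrow> 'a set. (\<forall>k. closed (C k)) \<and> dom (f n) = \<Union>(range C)"
      by (rule open_fsigma_ex[OF od])
  qed
  then obtain C :: "nat \<Rightarrow> nat \<Rightarrow> 'a set" where C0: "\<forall>n. (\<forall>k. closed (C n k)) \<and> dom (f n) = \<Union>(range (C n))"
    by (rule choice[THEN exE])
  then have C: "\<And>n k. closed (C n k)" "\<And>n. dom (f n) = (\<Union>k. C n k)" by auto
  define F where "F = (\<lambda>m. {(x, y). x \<in> C (fst (prod_decode m)) (snd (prod_decode m)) \<and>
      y = the (f (fst (prod_decode m)) x)})"
  have cl: "closed (F m)" for m
  proof -
    obtain n k where nk: "prod_decode m = (n, k)" by fastforce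
    have "continuous_on (C n k) (\<lambda>x. the (f n x))"
      by (rule continuous_on_subset[of "dom (f n)"]) (use assms C(2) in \<open>auto simp: partial_cont_open_map_def\<close>)
    then show ?thesis unfolding F_def nk using closed_graph_on[OF C(1)[of n k]] by simp
  qed
  have eq: "graph_union f = (\<Union>m. F m)"
  proof safe
    fix x y assume "(x, y) \<in> graph_union f"
    then obtain n where n: "f n x = Some y" unfolding graph_union_def by auto
    then have "x \<in> dom (f n)" by auto
    then obtain k where k: "x \<in> C n k" using C(2) by auto
    show "(x, y) \<in> (\<Union>m. F m)"
      using k n by (intro UN_I[of "prod_encode (n, k)"]) (auto simp: F_def)
  next
    fix x y m assume "(x, y) \<in> F m"
    then obtain n k where nk: "prod_decode m = (n, k)" and xy: "x \<in> C n k" "y = the (f n x)"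
      unfolding F_def by (cases "prod_decode m") auto
    then have "x \<in> dom (f n)" using C(2) by auto
    then have "f n x = Some y" using xy by auto
    then show "(x, y) \<in> graph_union f" unfolding graph_union_def by auto
  qed
  show ?thesis unfolding eq by (rule fsigma.intros[OF cl])
qed

theorem corollary2p2:
  fixes f :: "nat \<Rightarrow> ('a::polish_space \<rightharpoonup> 'a)"
  assumes "complex_situation f"
  shows "fsigma (graph_union f) \<and> is_digraph (graph_union f) \<and>
         (\<forall>c :: 'a \<Rightarrow> 'b::polish_space. countable (UNIV :: 'b set) \<longrightarrow>
              \<not> borel_coloring (graph_union f) c)"
proof (intro conjI allI impI)
  have pcom: "\<And>n. partial_cont_open_map (f n)" and diag: "diagonal \<subseteq> closure (graph_union f) - graph_union f"
    using assms unfolding complex_situation_def by auto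
  show "fsigma (graph_union f)" by (rule fsigma_graph_union[OF pcom])
  show "is_digraph (graph_union f)" using diag unfolding is_digraph_def by blast
  fix c :: "'a \<Rightarrow> 'b"
  assume cb: "countable (UNIV :: 'b set)"
  show "\<not> borel_coloring (graph_union f) c"
  proof
    assume col: "borel_coloring (graph_union f) c"
    then have meas: "c \<in> borel_measurable borel" and ne: "\<And>x y. (x, y) \<in> graph_union f \<Longrightarrow> c x \<noteq> c y"
      unfolding borel_coloring_def by auto
    define B where "B = (\<lambda>b. c -` {b})"
    have "B b \<in> sets borel" for b
      using measurable_sets[OF meas, of "{b}"] by (simp add: B_def)
    then have "\<forall>b. \<exists>U. open U \<and> meagerX ((B b - U) \<union> (U - B b))"
      using BPX_borel unfolding BPX_def by blast
    then obtain U where U0: "\<forall>b. open (U b) \<and> meagerX ((B b - U b) \<union> (U b - B b))"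
      by (rule choice[THEN exE])
    then have U: "\<And>b. open (U b)" "\<And>b. meagerX ((B b - U b) \<union> (U b - B b))" by auto
    have "\<exists>b. U b \<noteq> {}"
    proof (rule ccontr)
      assume "\<not> ?thesis"
      then have "\<And>b. meagerX (B b)" using U(2) by simp
      then have "meagerX (\<Union>b\<in>UNIV. B b)" using cb by (intro meagerX_UN) auto
      moreover have "(\<Union>b\<in>UNIV. B b) = UNIV" unfolding B_def by auto
      ultimately obtain \<G> where G: "countable \<G>" "\<And>T. T \<in> \<G> \<Longrightarrow> closed T \<and> interior T = {}" "(UNIV::'a set) \<subseteq> \<Union>\<G>"
        unfolding meagerX_def by auto
      have "\<not> (UNIV::'a set) \<subseteq> \<Union>\<G>"
      proof (rule baire_open)
        fix T assume T: "T \<in> \<G>"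
        have "closedin euclidean T" using G(2)[OF T] closed_closedin by blast
        then have "closedin (top_of_set UNIV) T" by (simp only: subtopology_UNIV)
        moreover have "\<forall>W. open W \<and> W \<subseteq> T \<longrightarrow> W = {}"
          using G(2)[OF T] interior_maximal by blast
        ultimately show "closedin (top_of_set UNIV) T \<and> (\<forall>W. open W \<and> W \<subseteq> T \<longrightarrow> W = {})"
          by blast
      qed (use G in auto)
      with G(3) show False by blast
    qed
    then obtain b x where x: "x \<in> U b" by blast
    obtain \<G> where G: "countable \<G>" "\<And>T. T \<in> \<G> \<Longrightarrow> closed T \<and> interior T = {}"
      "(B b - U b) \<union> (U b - B b) \<subseteq> \<Union>\<G>"
      using U(2)[of b] unfolding meagerX_def by auto
    have "(x, x) \<in> closure (graph_union f)" using diag unfolding diagonal_def by auto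
    moreover have "open (U b \<times> U b)" "(x, x) \<in> U b \<times> U b" using U(1) x by (auto intro: open_Times)
    ultimately have "graph_union f \<inter> (U b \<times> U b) \<noteq> {}"
      unfolding closure_iff_nhds_not_empty by blast
    then obtain n z w where zw: "f n z = Some w" "z \<in> U b" "w \<in> U b"
      unfolding graph_union_def by auto
    define g where "g = (\<lambda>y. the (f n y))"
    define D where "D = dom (f n)"
    have oD: "open D" and cg: "continuous_on D g" and og: "\<And>W. open W \<Longrightarrow> W \<subseteq> D \<Longrightarrow> open (g ` W)"
      using pcom[of n] unfolding partial_cont_open_map_def D_def g_def by auto
    define V where "V = U b \<inter> (D \<inter> g -` U b)"
    have "open (g -` U b \<inter> D)" using continuous_on_open_vimage[OF oD] cg U(1) by blast
    then have oV: "open V" unfolding V_def using U(1) by (simp add: Int_commute open_Int)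
    have zV: "z \<in> V" unfolding V_def D_def g_def using zw by auto
    have cgV: "continuous_on V g" using cg by (rule continuous_on_subset) (auto simp: V_def)
    define \<H> where "\<H> = (\<lambda>T. V \<inter> T) ` \<G> \<union> (\<lambda>T. V \<inter> g -` T) ` \<G>"
    have "\<not> V \<subseteq> \<Union>\<H>"
    proof (rule baire_open)
      show "countable \<H>" unfolding \<H>_def using G(1) by auto
      fix T assume "T \<in> \<H>"
      then consider S where "S \<in> \<G>" "T = V \<inter> S" | S where "S \<in> \<G>" "T = V \<inter> g -` S"
        unfolding \<H>_def by blast
      then show "closedin (top_of_set V) T \<and> (\<forall>W. open W \<and> W \<subseteq> T \<longrightarrow> W = {})"
      proof cases
        case 1
        have "closedin (top_of_set V) (V \<inter> S)" using G(2)[OF 1(1)] by (simp add: closedin_closed_Int)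
        moreover have "\<forall>W. open W \<and> W \<subseteq> V \<inter> S \<longrightarrow> W = {}"
          using G(2)[OF 1(1)] interior_maximal[of _ S] by blast
        ultimately show ?thesis using 1(2) by blast
      next
        case 2
        have "closedin (top_of_set V) T"
          using continuous_closedin_preimage[OF cgV, of S] G(2)[OF 2(1)] 2(2) by auto
        moreover have "W = {}" if "open W" "W \<subseteq> T" for W
        proof -
          have "W \<subseteq> D" using that 2(2) V_def by auto
          then have "open (g ` W)" using og that(1) by auto
          moreover have "g ` W \<subseteq> S" using that 2(2) by auto
          ultimately have "g ` W \<subseteq> interior S" by (rule interior_maximal[rotated])
          then show "W = {}" using G(2)[OF 2(1)] by auto
        qed
        ultimately show ?thesis by blast
      qed
    qed (use oV zV in auto)
    then obtain y where y: "y \<in> V" "y \<notin> \<Union>\<H>" by blast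
    have yM: "y \<notin> \<Union>\<G>" using y unfolding \<H>_def by auto
    have gyM: "g y \<notin> \<Union>\<G>" using y unfolding \<H>_def by auto
    have "y \<in> U b" "g y \<in> U b" "y \<in> D" using y(1) unfolding V_def by auto
    then have "y \<in> B b" "g y \<in> B b" using yM gyM G(3) by auto
    then have "c y = c (g y)" unfolding B_def by auto
    moreover have "(y, g y) \<in> graph_union f"
      using \<open>y \<in> D\<close> unfolding graph_union_def D_def g_def by auto
    ultimately show False using ne by blast
  qed
qed

end
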